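(* Assume (i) the Singer family hypothesis: for every prime $p$ there is a finite $S\subseteq\mathbb{Z}$ with $|S|=p+1$ that is Sidon modulo $p^2+p+1$; and (ii) the subpolynomial prime gap hypothesis: for every real $\delta>0$ there exists $x_0$ such that for every natural number $x\ge x_0$ there is a prime $p$ with $x-x^{\delta}<p\le x$. Then for every real $\varepsilon>0$ there exist $C\ge0$ and $N_0\in\mathbb{N}$ such that $h(N)\ge\sqrt{N}-C N^{\varepsilon}$ for all $N\ge N_0$.
   Context: A finite set $A\subseteq\mathbb{Z}$ is Sidon if $a+b=c+d$ with $a,b,c,d\in A$ implies $\{a,b\}=\{c,d\}$ as unordered pairs; for a positive integer $M$ it is Sidon modulo $M$ if $M\mid (a+b)-(c+d)$ with $a,b,c,d\in A$ implies $\{a,b\}=\{c,d\}$ as unordered pairs. For a natural number $N$, $h(N)=\max\{|A| : A\subseteq\{1,\dots,N\},\ A\text{ Sidon}\}$. *)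

theory Defs
  imports Complex_Main "HOL-Computational_Algebra.Primes"
begin

definition sidon :: "int set \<Rightarrow> bool" where
  "sidon A \<longleftrightarrow> (\<forall>a\<in>A. \<forall>b\<in>A. \<forall>c\<in>A. \<forall>d\<in>A. a + b = c + d \<longrightarrow> {a, b} = {c, d})"

definition sidon_mod :: "int \<Rightarrow> int set \<Rightarrow> bool" where
  "sidon_mod M A \<longleftrightarrow> (\<forall>a\<in>A. \<forall>b\<in>A. \<forall>c\<in>A. \<forall>d\<in>A.
      M dvd ((a + b) - (c + d)) \<longrightarrow> {a, b} = {c, d})"

definition h :: "nat \<Rightarrow> nat" where
  "h N = Max {card A | A. A \<subseteq> {1..int N} \<and> sidon A}"

end

theory Submission
  imports Defs
begin

lemma sidon_mod_embed:
  assumes M: "M > 0" and S: "sidon_mod M S"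
  shows "inj_on (\<lambda>a. a mod M + 1) S \<and> (\<lambda>a. a mod M + 1) ` S \<subseteq> {1..M}
         \<and> sidon ((\<lambda>a. a mod M + 1) ` S)"
proof (intro conjI)
  show "inj_on (\<lambda>a. a mod M + 1) S"
  proof (rule inj_onI)
    fix a c assume a: "a \<in> S" and c: "c \<in> S" and e: "a mod M + 1 = c mod M + 1"
    have "M dvd ((a + a) - (c + a))" using e
      by (simp add: mod_eq_dvd_iff)
    hence "{a, a} = {c, a}" using S a c unfolding sidon_mod_def by blast
    thus "a = c" by auto
  qed
  show "(\<lambda>a. a mod M + 1) ` S \<subseteq> {1..M}"
    using M by (auto simp: pos_mod_bound pos_mod_sign add1_zle_eq)
  show "sidon ((\<lambda>a. a mod M + 1) ` S)"
    unfolding sidon_def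
  proof (intro ballI impI)
    fix a' b' c' d' assume "a' \<in> (\<lambda>a. a mod M + 1) ` S" "b' \<in> (\<lambda>a. a mod M + 1) ` S"
      "c' \<in> (\<lambda>a. a mod M + 1) ` S" "d' \<in> (\<lambda>a. a mod M + 1) ` S"
      and e: "a' + b' = c' + d'"
    then obtain a b c d where abcd: "a \<in> S" "b \<in> S" "c \<in> S" "d \<in> S"
      "a' = a mod M + 1" "b' = b mod M + 1" "c' = c mod M + 1" "d' = d mod M + 1" by blast
    have "(a + b) mod M = (c + d) mod M"
    proof -
      have "(a + b) mod M = (a mod M + b mod M) mod M" by (simp add: mod_add_eq)
      also have "a mod M + b mod M = c mod M + d mod M" using e abcd by simp
      also have "(c mod M + d mod M) mod M = (c + d) mod M" by (simp add: mod_add_eq)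
      finally show ?thesis .
    qed
    hence "M dvd ((a + b) - (c + d))" by (simp add: mod_eq_dvd_iff)
    hence "{a, b} = {c, d}" using S abcd unfolding sidon_mod_def by blast
    thus "{a', b'} = {c', d'}" using abcd by (auto simp: doubleton_eq_iff)
  qed
qed

lemma h_ge:
  assumes "A \<subseteq> {1..int N}" "sidon A"
  shows "card A \<le> h N"
proof -
  have "{card A | A. A \<subseteq> {1..int N} \<and> sidon A} \<subseteq> card ` Pow {1..int N}" by auto
  hence fin: "finite {card A | A. A \<subseteq> {1..int N} \<and> sidon A}"
    using finite_subset by blast
  show ?thesis unfolding h_def using assms by (intro Max_ge[OF fin]) blast
qed

lemma singer_h:
  assumes singer: "\<And>p::nat. prime p \<Longrightarrow>
      \<exists>S::int set. finite S \<and> card S = p + 1 \<and> sidon_mod (int (p^2 + p + 1)) S"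
    and p: "prime p" and N: "p^2 + p + 1 \<le> N"
  shows "p + 1 \<le> h N"
proof -
  obtain S :: "int set" where S: "finite S" "card S = p + 1" "sidon_mod (int (p^2 + p + 1)) S"
    using singer[OF p] by blast
  define M where "M = int (p^2 + p + 1)"
  have M: "M > 0" unfolding M_def by (simp only: of_nat_0_less_iff)
  note E = sidon_mod_embed[OF M S(3)[folded M_def]]
  have "card ((\<lambda>a. a mod M + 1) ` S) = p + 1" using E S(2) by (simp add: card_image)
  moreover have "(\<lambda>a. a mod M + 1) ` S \<subseteq> {1..int N}"
  proof -
    have "int (p^2 + p + 1) \<le> int N" using N by (simp only: of_nat_le_iff)
    hence "{1..M} \<subseteq> {1..int N}" unfolding M_def by auto
    thus ?thesis using E by blast
  qed
  ultimately show ?thesis using h_ge E by metis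
qed

theorem mainTheorem14:
  assumes singer: "\<And>p::nat. prime p \<Longrightarrow>
      \<exists>S::int set. finite S \<and> card S = p + 1 \<and> sidon_mod (int (p^2 + p + 1)) S"
  and gaps: "\<And>\<delta>::real. \<delta> > 0 \<Longrightarrow>
      \<exists>x0::real. \<forall>x::nat. real x \<ge> x0 \<longrightarrow>
        (\<exists>p::nat. prime p \<and> real x - real x powr \<delta> < real p \<and> p \<le> x)"
  shows "\<forall>\<epsilon>::real. \<epsilon> > 0 \<longrightarrow>
      (\<exists>C::real. C \<ge> 0 \<and> (\<exists>N0::nat. \<forall>N\<ge>N0.
         real (h N) \<ge> sqrt (real N) - C * real N powr \<epsilon>))"
proof (intro allI impI)
  fix \<epsilon> :: real assume ep: "\<epsilon> > 0"
  obtain x0 where x0: "\<forall>x::nat. real x \<ge> x0 \<longrightarrow>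
        (\<exists>p::nat. prime p \<and> real x - real x powr \<epsilon> < real p \<and> p \<le> x)"
    using gaps[OF ep] by blast
  define K where "K = nat \<lceil>x0\<rceil> + 2"
  show "\<exists>C::real. C \<ge> 0 \<and> (\<exists>N0::nat. \<forall>N\<ge>N0.
         real (h N) \<ge> sqrt (real N) - C * real N powr \<epsilon>)"
  proof (intro exI conjI allI impI)
    show "(2::real) \<ge> 0" by simp
    fix N :: nat assume NK: "N \<ge> K^2"
    define s where "s = nat \<lfloor>sqrt (real N)\<rfloor>"
    have sK: "s \<ge> K"
    proof -
      have "real (K^2) \<le> real N" using NK by (simp only: of_nat_le_iff)
      hence "sqrt (real (K^2)) \<le> sqrt (real N)" by (rule real_sqrt_le_mono)
      hence "sqrt (real N) \<ge> real K" by simp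
      thus ?thesis unfolding s_def by (simp add: le_nat_floor)
    qed
    have s_le: "real s \<le> sqrt (real N)" unfolding s_def by simp
    have s_gt: "sqrt (real N) < real s + 1" unfolding s_def by linarith
    define x where "x = s - 1"
    have xs: "x + 1 = s" using sK unfolding x_def K_def by simp
    have "real x \<ge> x0" using sK xs unfolding K_def by linarith
    then obtain p where p: "prime p" "real x - real x powr \<epsilon> < real p" "p \<le> x"
      using x0 by blast
    have "real s ^ 2 \<le> sqrt (real N) ^ 2" by (rule power_mono[OF s_le]) simp
    hence "real (s^2) \<le> real N" by simp
    hence sN: "s^2 \<le> N" by (simp only: of_nat_le_iff)
    have "p*p \<le> x*x" using p(3) by (simp add: mult_le_mono)
    hence "p^2 + p + 1 \<le> (x+1)^2" using p(3)
      by (simp add: power2_eq_square algebra_simps)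
    hence "p^2 + p + 1 \<le> N" using sN xs by simp
    hence "p + 1 \<le> h N" using singer_h[OF singer p(1)] by blast
    hence hp: "real (p + 1) \<le> real (h N)" by (simp only: of_nat_le_iff)
    have "1 \<le> K^2" unfolding K_def by simp
    hence "1 \<le> N" using NK by linarith
    hence N1: "real N \<ge> 1" by simp
    have "real N * 1 \<le> real N * real N" using N1 by (intro mult_left_mono) auto
    hence "real N \<le> real N ^ 2" by (simp add: power2_eq_square)
    hence "sqrt (real N) \<le> sqrt (real N ^ 2)" by (rule real_sqrt_le_mono)
    hence "sqrt (real N) \<le> real N" by simp
    moreover have "real x \<le> sqrt (real N)" using s_le xs by simp
    ultimately have "real x \<le> real N" by linarith
    hence "real x powr \<epsilon> \<le> real N powr \<epsilon>"
      using ep by (intro powr_mono2) auto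
    moreover have "1 \<le> real N powr \<epsilon>" using N1 ep by (simp add: ge_one_powr_ge_zero)
    ultimately show "real (h N) \<ge> sqrt (real N) - 2 * real N powr \<epsilon>"
      using hp p(2) s_gt xs by simp
  qed
qed

end
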